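(* Let $m,n,d,P$ be positive integers with $P\ge mnd+n-1$, let $N_1,N_0,B$ be positive integers with $m\mid N_1$, $n\mid N_0$, $d\mid B$, and let $\bm{W}\in\mathbb{R}^{N_1\times N_0}$, $\bm{X}\in\mathbb{R}^{N_0\times B}$. Consider the Generalized PolyDot scheme for computing $\bm{S}=\bm{W}\bm{X}$ with $P$ nodes defined in the context. Then the recovery threshold of this scheme is $mnd+n-1$: from the computed outputs $\widetilde{\bm{S}}_p$ of any $mnd+n-1$ of the $P$ nodes, the whole product $\bm{S}=\bm{W}\bm{X}$ can be recovered. Consequently, the scheme tolerates up to $P-mnd-n+1$ erasures.
   Context: Block-partition $\bm{W}$ into an $m\times n$ grid of blocks $\bm{W}_{i,j}\in\mathbb{R}^{(N_1/m)\times(N_0/n)}$ and $\bm{X}$ into an $n\times d$ grid of blocks $\bm{X}_{j,k}\in\mathbb{R}^{(N_0/n)\times(B/d)}$, so that $\bm{S}=\bm{W}\bm{X}$ has an $m\times d$ grid of blocks $\bm{S}_{i,k}=\sum_{j=0}^{n-1}\bm{W}_{i,j}\bm{X}_{j,k}$. Define $\widetilde{\bm{W}}(u,v)=\sum_{i=0}^{m-1}\sum_{j=0}^{n-1}\bm{W}_{i,j}u^iv^j$ and $\widetilde{\bm{X}}(v,w)=\sum_{j=0}^{n-1}\sum_{k=0}^{d-1}\bm{X}_{j,k}v^{n-1-j}w^k$. Choose $P$ distinct real numbers $b_0,\dots,b_{P-1}$ and set $a_p=b_p^{\,n}$, $c_p=b_p^{\,mn}$. Node $p$ stores only $\widetilde{\bm{W}}(a_p,b_p)$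 (an $\frac{N_1}{m}\times\frac{N_0}{n}$ matrix) and $\widetilde{\bm{X}}(b_p,c_p)$ (an $\frac{N_0}{n}\times\frac{B}{d}$ matrix) and computes $\widetilde{\bm{S}}_p=\widetilde{\bm{W}}(a_p,b_p)\widetilde{\bm{X}}(b_p,c_p)$. The recovery threshold is the number of node outputs, out of $P$, that a decoder needs (from any subset of nodes of that size) to recover $\bm{S}$. *)

theory Defs
  imports Main "HOL.Real"
begin

text \<open>Matrices of variable size are represented as functions nat \<Rightarrow> nat \<Rightarrow> real,
  of which only the entries with indices in the stated ranges are meaningful.\<close>

definition Wblock :: "nat \<Rightarrow> nat \<Rightarrow> nat \<Rightarrow> nat \<Rightarrow> (nat \<Rightarrow> nat \<Rightarrow> real) \<Rightarrow> nat \<Rightarrow> nat \<Rightarrow> nat \<Rightarrow> nat \<Rightarrow> real" where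
  "Wblock N1 N0 m n W i j r c = W (i * (N1 div m) + r) (j * (N0 div n) + c)"

definition Xblock :: "nat \<Rightarrow> nat \<Rightarrow> nat \<Rightarrow> nat \<Rightarrow> (nat \<Rightarrow> nat \<Rightarrow> real) \<Rightarrow> nat \<Rightarrow> nat \<Rightarrow> nat \<Rightarrow> nat \<Rightarrow> real" where
  "Xblock N0 B n d X j k r c = X (j * (N0 div n) + r) (k * (B div d) + c)"

definition Wtilde :: "nat \<Rightarrow> nat \<Rightarrow> nat \<Rightarrow> nat \<Rightarrow> (nat \<Rightarrow> nat \<Rightarrow> real) \<Rightarrow> real \<Rightarrow> real \<Rightarrow> nat \<Rightarrow> nat \<Rightarrow> real" where
  "Wtilde N1 N0 m n W u v r c =
     (\<Sum>i<m. \<Sum>j<n. Wblock N1 N0 m n W i j r c * u ^ i * v ^ j)"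

definition Xtilde :: "nat \<Rightarrow> nat \<Rightarrow> nat \<Rightarrow> nat \<Rightarrow> (nat \<Rightarrow> nat \<Rightarrow> real) \<Rightarrow> real \<Rightarrow> real \<Rightarrow> nat \<Rightarrow> nat \<Rightarrow> real" where
  "Xtilde N0 B n d X v w r c =
     (\<Sum>j<n. \<Sum>k<d. Xblock N0 B n d X j k r c * v ^ (n - 1 - j) * w ^ k)"

definition node_output ::
  "nat \<Rightarrow> nat \<Rightarrow> nat \<Rightarrow> nat \<Rightarrow> nat \<Rightarrow> nat \<Rightarrow> (nat \<Rightarrow> real) \<Rightarrow>
   (nat \<Rightarrow> nat \<Rightarrow> real) \<Rightarrow> (nat \<Rightarrow> nat \<Rightarrow> real) \<Rightarrow> nat \<Rightarrow> nat \<Rightarrow> nat \<Rightarrow> real" where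
  "node_output m n d N1 N0 B b W X p r c =
     (if r < N1 div m \<and> c < B div d then
        (\<Sum>t < N0 div n. Wtilde N1 N0 m n W ((b p) ^ n) (b p) r t
                         * Xtilde N0 B n d X (b p) ((b p) ^ (m * n)) t c)
      else 0)"

end

theory Submission imports Defs "HOL-Computational_Algebra.Polynomial" begin

lemma coeffs_zero:
  fixes a :: "nat \<Rightarrow> real" and A :: "real set"
  assumes "finite A" "card A = N" "\<forall>x\<in>A. (\<Sum>e<N. a e * x^e) = 0"
  shows "\<forall>e<N. a e = 0"
proof -
  define p where "p = (\<Sum>e<N. monom (a e) e)"
  have pv: "poly p x = (\<Sum>e<N. a e * x^e)" for x
    by (simp add: p_def poly_sum poly_monom)
  have cf: "coeff p k = (if k < N then a k else 0)" for k
    by (simp add: p_def coeff_sum coeff_monom)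
  show ?thesis
  proof (cases "p = 0")
    case True
    then show ?thesis using cf by (metis coeff_0)
  next
    case False
    have "card A \<le> card {x. poly p x = 0}"
      using assms False by (intro card_mono poly_roots_finite) (auto simp: pv)
    also have "\<dots> \<le> degree p" by (rule card_poly_roots_bound[OF False])
    also have "degree p < N"
    proof (cases N)
      case 0 then show ?thesis using False cf by (metis leading_coeff_0_iff not_less0)
    next
      case (Suc M)
      have "degree p \<le> M" by (rule degree_le) (auto simp: cf Suc)
      then show ?thesis using Suc by simp
    qed
    finally show ?thesis using assms by simp
  qed
qed

lemma exp_iff:
  fixes n m i j j' k i0 k0 :: nat
  assumes "i < m" "j < n" "j' < n" "i0 < m" "k < d" "k0 < d"
  shows "(n*i + (j + (n-1-j')) + m*n*k = n*i0 + (n-1) + m*n*k0) \<longleftrightarrow> (i = i0 \<and> j' = j \<and> k = k0)"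
proof
  assume h: "n*i + (j + (n-1-j')) + m*n*k = n*i0 + (n-1) + m*n*k0"
  define A where "A = i + m*k"
  define A0 where "A0 = i0 + m*k0"
  have h2: "n*A + (j + (n-1-j')) = n*A0 + (n-1)" using h unfolding A_def A0_def
    by (simp add: algebra_simps)
  have "A = A0"
  proof (rule ccontr)
    assume "A \<noteq> A0"
    then consider "A \<ge> A0 + 1" | "A0 \<ge> A + 1" by linarith
    then show False
    proof cases
      case 1
      then have "n*A \<ge> n*A0 + n" by (metis distrib_left mult.right_neutral mult_le_mono2)
      then show False using h2 assms by linarith
    next
      case 2
      then have "n*A0 \<ge> n*A + n" by (metis distrib_left mult.right_neutral mult_le_mono2)
      then show False using h2 assms by linarith
    qed
  qed
  then have "j' = j" using h2 assms by simp
  moreover have "i = i0 \<and> k = k0"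
  proof -
    have "(i + m*k) mod m = i" "(i0 + m*k0) mod m = i0" using assms by auto
    then have "i = i0" using \<open>A = A0\<close> A_def A0_def by metis
    moreover then have "m*k = m*k0" using \<open>A = A0\<close> A_def A0_def by simp
    then have "k = k0" using assms by simp
    ultimately show ?thesis by simp
  qed
  ultimately show "i = i0 \<and> j' = j \<and> k = k0" by simp
qed (use assms in auto)


definition Gc where
  "Gc N1 N0 B m n d W X r c i j j' k =
    (\<Sum>t < N0 div n. Wblock N1 N0 m n W i j r t * Xblock N0 B n d X j' k t c)"

definition ex :: "nat \<Rightarrow> nat \<Rightarrow> nat \<Rightarrow> nat \<Rightarrow> nat \<Rightarrow> nat \<Rightarrow> nat" where
  "ex m n i j j' k = n*i + (j + (n-1-j')) + m*n*k"

lemma ex_pow: "(x::real) ^ ex m n i j j' k = (x^n)^i * x^j * (x^(n-1-j') * (x^(m*n))^k)"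
  by (simp only: ex_def power_add power_mult[symmetric] mult_ac)

definition coef where
  "coef N1 N0 B m n d W X r c e =
    (\<Sum>i<m. \<Sum>j<n. \<Sum>j'<n. \<Sum>k<d.
       if ex m n i j j' k = e then Gc N1 N0 B m n d W X r c i j j' k else 0)"

lemma expand1:
  "(\<Sum>t < N0 div n. Wtilde N1 N0 m n W (x ^ n) x r t * Xtilde N0 B n d X x (x ^ (m * n)) t c)
   = (\<Sum>i<m. \<Sum>j<n. \<Sum>j'<n. \<Sum>k<d.
        Gc N1 N0 B m n d W X r c i j j' k * x ^ ex m n i j j' k)"
proof -
  have "(\<Sum>t < N0 div n. Wtilde N1 N0 m n W (x ^ n) x r t * Xtilde N0 B n d X x (x ^ (m * n)) t c)
    = (\<Sum>t < N0 div n. \<Sum>i<m. \<Sum>j<n. \<Sum>j'<n. \<Sum>k<d.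
         Wblock N1 N0 m n W i j r t * Xblock N0 B n d X j' k t c * x ^ ex m n i j j' k)"
    unfolding Wtilde_def Xtilde_def
    apply (simp only: sum_distrib_right)
    apply (simp only: sum_distrib_left)
    apply (intro sum.cong refl)
    apply (simp only: ex_pow mult_ac)
    done
  also have "\<dots> = (\<Sum>i<m. \<Sum>t < N0 div n. \<Sum>j<n. \<Sum>j'<n. \<Sum>k<d.
         Wblock N1 N0 m n W i j r t * Xblock N0 B n d X j' k t c * x ^ ex m n i j j' k)"
    by (rule sum.swap)
  also have "\<dots> = (\<Sum>i<m. \<Sum>j<n. \<Sum>t < N0 div n. \<Sum>j'<n. \<Sum>k<d.
         Wblock N1 N0 m n W i j r t * Xblock N0 B n d X j' k t c * x ^ ex m n i j j' k)"
    by (rule sum.cong[OF refl], rule sum.swap)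
  also have "\<dots> = (\<Sum>i<m. \<Sum>j<n. \<Sum>j'<n. \<Sum>t < N0 div n. \<Sum>k<d.
         Wblock N1 N0 m n W i j r t * Xblock N0 B n d X j' k t c * x ^ ex m n i j j' k)"
    by (rule sum.cong[OF refl], rule sum.cong[OF refl], rule sum.swap)
  also have "\<dots> = (\<Sum>i<m. \<Sum>j<n. \<Sum>j'<n. \<Sum>k<d. \<Sum>t < N0 div n.
         Wblock N1 N0 m n W i j r t * Xblock N0 B n d X j' k t c * x ^ ex m n i j j' k)"
    by (rule sum.cong[OF refl], rule sum.cong[OF refl], rule sum.cong[OF refl], rule sum.swap)
  also have "\<dots> = (\<Sum>i<m. \<Sum>j<n. \<Sum>j'<n. \<Sum>k<d.
        Gc N1 N0 B m n d W X r c i j j' k * x ^ ex m n i j j' k)"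
    unfolding Gc_def by (simp add: sum_distrib_right)
  finally show ?thesis .
qed

lemma ex_bound:
  fixes n m i j j' k d :: nat
  assumes "i < m" "j < n" "j' < n" "k < d"
  shows "ex m n i j j' k < m*n*d + n - 1"
proof -
  note ex_def[simp]
  have a: "n*i + n \<le> n*m" using assms by (metis Suc_leI mult_Suc_right mult_le_mono2 add.commute)
  have b: "m*n*k + m*n \<le> m*n*d" using assms by (metis Suc_leI mult_Suc_right mult_le_mono2 add.commute)
  have "n*m \<le> m*n" by simp
  then show ?thesis unfolding ex_def using a b assms by linarith
qed

lemma expand2:
  assumes "N = m*n*d + n - 1"
  shows "(\<Sum>i<m. \<Sum>j<n. \<Sum>j'<n. \<Sum>k<d.
        Gc N1 N0 B m n d W X r c i j j' k * x ^ ex m n i j j' k)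
     = (\<Sum>e<N. coef N1 N0 B m n d W X r c e * x ^ e)"
proof -
  have "(\<Sum>e<N. coef N1 N0 B m n d W X r c e * x ^ e) =
     (\<Sum>e<N. \<Sum>i<m. \<Sum>j<n. \<Sum>j'<n. \<Sum>k<d.
       (if ex m n i j j' k = e then Gc N1 N0 B m n d W X r c i j j' k * x^e else 0))"
    unfolding coef_def sum_distrib_right by (intro sum.cong refl) simp
  also have "\<dots> = (\<Sum>i<m. \<Sum>j<n. \<Sum>j'<n. \<Sum>k<d. \<Sum>e<N.
       (if ex m n i j j' k = e then Gc N1 N0 B m n d W X r c i j j' k * x^e else 0))"
    by (subst sum.swap, rule sum.cong[OF refl], subst sum.swap, rule sum.cong[OF refl],
        subst sum.swap, rule sum.cong[OF refl], subst sum.swap, rule refl)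
  also have "\<dots> = (\<Sum>i<m. \<Sum>j<n. \<Sum>j'<n. \<Sum>k<d.
        Gc N1 N0 B m n d W X r c i j j' k * x ^ ex m n i j j' k)"
    by (intro sum.cong refl) (use ex_bound assms in auto)
  finally show ?thesis by simp
qed

lemma coef_e0:
  assumes "i0 < m" "k0 < d"
  shows "coef N1 N0 B m n d W X r c (n*i0 + (n-1) + m*n*k0) = (\<Sum>j<n. Gc N1 N0 B m n d W X r c i0 j j k0)"
proof -
  have "coef N1 N0 B m n d W X r c (n*i0 + (n-1) + m*n*k0) =
    (\<Sum>i<m. \<Sum>j<n. \<Sum>j'<n. \<Sum>k<d.
       if i = i0 \<and> j' = j \<and> k = k0 then Gc N1 N0 B m n d W X r c i j j' k else 0)"
  proof -
    have key: "\<And>i j j' k. i<m \<Longrightarrow> j<n \<Longrightarrow> j'<n \<Longrightarrow> k<d \<Longrightarrow>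
      (ex m n i j j' k = n*i0 + (n-1) + m*n*k0) = (i = i0 \<and> j' = j \<and> k = k0)"
      unfolding ex_def using exp_iff assms by blast
    show ?thesis unfolding coef_def
      apply (intro sum.cong refl)
      apply (subst key)
      apply auto
      done
  qed
  also have "\<dots> = (\<Sum>i<m. \<Sum>j<n. if i = i0 then Gc N1 N0 B m n d W X r c i0 j j k0 else 0)"
  proof (intro sum.cong refl)
    fix i j
    have "(\<Sum>j'<n. \<Sum>k<d. if i = i0 \<and> j' = j \<and> k = k0 then Gc N1 N0 B m n d W X r c i j j' k else 0)
      = (\<Sum>j'<n. if j' = j then (\<Sum>k<d. if k = k0 then (if i = i0 then Gc N1 N0 B m n d W X r c i0 j j k0 else 0) else 0) else 0)"
      by (intro sum.cong refl) auto
    also assume "j \<in> {..<n}"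
    then have "(\<Sum>j'<n. if j' = j then (\<Sum>k<d. if k = k0 then (if i = i0 then Gc N1 N0 B m n d W X r c i0 j j k0 else 0) else 0) else 0)
       = (if i = i0 then Gc N1 N0 B m n d W X r c i0 j j k0 else 0)"
      using assms by (simp add: sum.delta)
    finally show "(\<Sum>j'<n. \<Sum>k<d. if i = i0 \<and> j' = j \<and> k = k0 then Gc N1 N0 B m n d W X r c i j j' k else 0)
      = (if i = i0 then Gc N1 N0 B m n d W X r c i0 j j k0 else 0)" .
  qed
  also have "\<dots> = (\<Sum>i<m. if i = i0 then (\<Sum>j<n. Gc N1 N0 B m n d W X r c i0 j j k0) else 0)"
    by (intro sum.cong refl) auto
  also have "\<dots> = (\<Sum>j<n. Gc N1 N0 B m n d W X r c i0 j j k0)"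
    using assms by (simp add: sum.delta)
  finally show ?thesis .
qed


lemma prod_eq:
  assumes "n > 0" "n dvd N0" "q1 = N1 div m" "q2 = B div d"
  shows "(\<Sum>t<N0. W r t * X t c) = (\<Sum>j<n. Gc N1 N0 B m n d W X (r mod q1) (c mod q2) (r div q1) j j (c div q2))"
proof -
  define q0 where "q0 = N0 div n"
  have N0: "N0 = n * q0" using assms q0_def by simp
  have "(\<Sum>t<N0. W r t * X t c) = (\<Sum>j<n. \<Sum>t\<in>{j*q0..<j*q0+q0}. W r t * X t c)"
    unfolding N0 by (rule sum.nat_group[symmetric])
  also have "\<dots> = (\<Sum>j<n. \<Sum>t<q0. W r (j*q0+t) * X (j*q0+t) c)"
  proof (rule sum.cong[OF refl])
    fix j
    show "(\<Sum>t\<in>{j*q0..<j*q0+q0}. W r t * X t c) = (\<Sum>t<q0. W r (j*q0+t) * X (j*q0+t) c)"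
      using sum.shift_bounds_nat_ivl[of "\<lambda>t. W r t * X t c" 0 "j*q0" q0]
      by (simp add: atLeast0LessThan add.commute)
  qed
  also have "\<dots> = (\<Sum>j<n. Gc N1 N0 B m n d W X (r mod q1) (c mod q2) (r div q1) j j (c div q2))"
    unfolding Gc_def Wblock_def Xblock_def assms(3,4)[symmetric] q0_def[symmetric] by simp
  finally show ?thesis .
qed


lemma node_poly:
  assumes "r < N1 div m" "c < B div d" "N = m*n*d + n - 1"
  shows "node_output m n d N1 N0 B b W X p r c = (\<Sum>e<N. coef N1 N0 B m n d W X r c e * (b p) ^ e)"
  using assms unfolding node_output_def by (simp add: expand1 expand2[OF assms(3)])

theorem theorem2:
  fixes m n d P N1 N0 B :: nat and b :: "nat \<Rightarrow> real"
  assumes "m > 0" and "n > 0" and "d > 0" and "P > 0"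
    and "P \<ge> m * n * d + n - 1"
    and "N1 > 0" and "N0 > 0" and "B > 0"
    and "m dvd N1" and "n dvd N0" and "d dvd B"
    and "inj_on b {..<P}"
  shows "\<forall>K. K \<subseteq> {..<P} \<and> card K = m * n * d + n - 1 \<longrightarrow>
           (\<exists>dec :: (nat \<Rightarrow> nat \<Rightarrow> nat \<Rightarrow> real) \<Rightarrow> nat \<Rightarrow> nat \<Rightarrow> real.
              \<forall>W X :: nat \<Rightarrow> nat \<Rightarrow> real.
                \<forall>r < N1. \<forall>c < B.
                  dec (\<lambda>p. if p \<in> K then node_output m n d N1 N0 B b W X p else (\<lambda>_ _. 0)) r c
                  = (\<Sum>t < N0. W r t * X t c))"
proof (intro allI impI)
  fix K assume K: "K \<subseteq> {..<P} \<and> card K = m * n * d + n - 1"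
  define N where "N = m * n * d + n - 1"
  define F where "F = (\<lambda>W X. (\<lambda>p. if p \<in> K then node_output m n d N1 N0 B b W X p else (\<lambda>_ _. 0)))"
  define S where "S = (\<lambda>(W::nat \<Rightarrow> nat \<Rightarrow> real) (X::nat \<Rightarrow> nat \<Rightarrow> real) r c. (\<Sum>t < N0. W r t * X t c))"
  define q1 where "q1 = N1 div m"
  define q2 where "q2 = B div d"
  have q1: "q1 > 0" using assms unfolding q1_def by (metis dvd_div_eq_0_iff gr0I less_not_refl2)
  have q2: "q2 > 0" using assms unfolding q2_def by (metis dvd_div_eq_0_iff gr0I less_not_refl2)
  have N1: "N1 = m * q1" using assms q1_def by simp
  have B: "B = d * q2" using assms q2_def by simp
  have fK: "finite K" using K finite_subset by blast
  have injK: "inj_on b K" using K assms(12) inj_on_subset by blast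
  have cardA: "card (b ` K) = N" using K injK N_def by (simp add: card_image)
  have key: "S W X r c = S W' X' r c"
    if eq: "F W X = F W' X'" and r: "r < N1" and c: "c < B" for W X W' X' r c
  proof -
    define r' where "r' = r mod q1"
    define c' where "c' = c mod q2"
    define i0 where "i0 = r div q1"
    define k0 where "k0 = c div q2"
    have r': "r' < q1" using q1 r'_def by simp
    have c': "c' < q2" using q2 c'_def by simp
    have i0: "i0 < m" using r N1 q1 i0_def by (simp add: div_less_iff_less_mult mult.commute)
    have k0: "k0 < d" using c B q2 k0_def by (simp add: div_less_iff_less_mult mult.commute)
    have "\<forall>x\<in>b ` K. (\<Sum>e<N. (coef N1 N0 B m n d W X r' c' e - coef N1 N0 B m n d W' X' r' c' e) * x^e) = 0"
    proof
      fix x assume "x \<in> b ` K"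
      then obtain p where p: "p \<in> K" "x = b p" by blast
      have "node_output m n d N1 N0 B b W X p r' c' = node_output m n d N1 N0 B b W' X' p r' c'"
        using fun_cong[OF eq, of p] p unfolding F_def by simp
      then show "(\<Sum>e<N. (coef N1 N0 B m n d W X r' c' e - coef N1 N0 B m n d W' X' r' c' e) * x^e) = 0"
        using r' c' p unfolding q1_def q2_def
        by (simp add: node_poly[OF _ _ N_def] left_diff_distrib sum_subtractf)
    qed
    from coeffs_zero[OF _ cardA this] fK
    have ce: "\<forall>e<N. coef N1 N0 B m n d W X r' c' e = coef N1 N0 B m n d W' X' r' c' e" by simp
    have "ex m n i0 0 0 k0 < N" unfolding N_def using assms i0 k0 by (intro ex_bound) auto
    then have e0: "n*i0 + (n-1) + m*n*k0 < N" unfolding ex_def by simp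
    have "S W X r c = coef N1 N0 B m n d W X r' c' (n*i0 + (n-1) + m*n*k0)"
      unfolding S_def using prod_eq[OF assms(2) assms(10) q1_def q2_def] coef_e0[OF i0 k0]
      unfolding r'_def c'_def i0_def k0_def by simp
    also have "\<dots> = coef N1 N0 B m n d W' X' r' c' (n*i0 + (n-1) + m*n*k0)" using ce e0 by simp
    also have "\<dots> = S W' X' r c"
      unfolding S_def using prod_eq[OF assms(2) assms(10) q1_def q2_def] coef_e0[OF i0 k0]
      unfolding r'_def c'_def i0_def k0_def by simp
    finally show ?thesis .
  qed
  define dec where "dec = (\<lambda>f r c. SOME v. \<exists>W X. f = F W X \<and> v = S W X r c)"
  show "\<exists>dec :: (nat \<Rightarrow> nat \<Rightarrow> nat \<Rightarrow> real) \<Rightarrow> nat \<Rightarrow> nat \<Rightarrow> real.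
              \<forall>W X :: nat \<Rightarrow> nat \<Rightarrow> real.
                \<forall>r < N1. \<forall>c < B.
                  dec (\<lambda>p. if p \<in> K then node_output m n d N1 N0 B b W X p else (\<lambda>_ _. 0)) r c
                  = (\<Sum>t < N0. W r t * X t c)"
  proof (intro exI allI impI)
    fix W X :: "nat \<Rightarrow> nat \<Rightarrow> real" and r c assume r: "r < N1" and c: "c < B"
    have ex: "\<exists>v. \<exists>W' X'. F W X = F W' X' \<and> v = S W' X' r c" by blast
    obtain W' X' where h: "F W X = F W' X'" "dec (F W X) r c = S W' X' r c"
      using someI_ex[OF ex] unfolding dec_def by blast
    have "dec (F W X) r c = S W X r c" using h key[OF h(1) r c] by simp
    then show "dec (\<lambda>p. if p \<in> K then node_output m n d N1 N0 B b W X p else (\<lambda>_ _. 0)) r c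
                  = (\<Sum>t < N0. W r t * X t c)" unfolding F_def S_def by simp
  qed
qed

end
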